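(* Let $p\ge 2$ be an integer and $\eta>0$. Then $\tau_\ell^-(s)\le\frac{\pi}{2}$ for every $s\in[0,1]$.
   Context: For an integer $p\ge 2$ and a real parameter $\eta>-1$, define for $\tau\ge 0$ and $s\in[-1,1]$ $$\ell_-(\tau,s)=\cos\tau\,\sin\!\Big(\tau\eta s-\tfrac{\pi}{p}\Big)+s\sin\tau\,\cos\!\Big(\tau\eta s-\tfrac{\pi}{p}\Big),$$ and let $\tau_\ell^-(s)$ be the smallest positive root in $\tau$ of $\ell_-(\tau,s)=0$. *)

theory Defs
  imports "HOL-Analysis.Analysis"
begin

definition ell_minus :: "nat \<Rightarrow> real \<Rightarrow> real \<Rightarrow> real \<Rightarrow> real" where
  "ell_minus p \<eta> \<tau> s =
     cos \<tau> * sin (\<tau> * \<eta> * s - pi / real p) + s * sin \<tau> * cos (\<tau> * \<eta> * s - pi / real p)"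

definition tau_ell_minus :: "nat \<Rightarrow> real \<Rightarrow> real \<Rightarrow> real" where
  "tau_ell_minus p \<eta> s = Inf {\<tau>. 0 < \<tau> \<and> ell_minus p \<eta> \<tau> s = 0}"

end

theory Submission
  imports Defs
begin

lemma ell_cont: "continuous_on A (\<lambda>t. ell_minus p \<eta> t s)"
  unfolding ell_minus_def by (intro continuous_intros)

lemma root_exists:
  fixes p :: nat and \<eta> s :: real
  assumes "p \<ge> 2" and "\<eta> > 0" and "0 \<le> s" and "s \<le> 1"
  shows "\<exists>\<tau>. 0 < \<tau> \<and> \<tau> \<le> pi/2 \<and> ell_minus p \<eta> \<tau> s = 0"
proof -
  have pp: "real p \<ge> 2" using assms(1) by simp
  have a0: "0 < pi / real p" using pp by simp
  have a1: "pi / real p \<le> pi/2" using pp by (intro divide_left_mono) auto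
  have sn: "sin (pi / real p) > 0" using a0 a1 pi_gt_zero by (intro sin_gt_zero) linarith+
  have l0: "ell_minus p \<eta> 0 s < 0"
    unfolding ell_minus_def using sn by simp
  obtain T where T: "0 < T" "T \<le> pi/2" "ell_minus p \<eta> T s \<ge> 0"
  proof (cases "s * \<eta> * (pi/2) \<le> pi / real p")
    case True
    let ?th = "pi/2 * \<eta> * s - pi / real p"
    have t1: "?th \<le> 0" using True by (simp add: algebra_simps)
    have "pi/2 * \<eta> * s \<ge> 0" using assms by simp
    hence t2: "?th \<ge> - (pi/2)" using a1 by linarith
    have "cos ?th \<ge> 0" using t1 t2 by (intro cos_ge_zero) auto
    hence "ell_minus p \<eta> (pi/2) s \<ge> 0" unfolding ell_minus_def using assms by simp
    then show ?thesis using that[of "pi/2"] by simp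
  next
    case False
    have sp: "s > 0" using False a0 assms by (cases "s = 0") auto
    define T where "T = pi / (real p * \<eta> * s)"
    have Tpos: "T > 0" unfolding T_def using sp assms pp by simp
    have "T * \<eta> * s = pi / real p" unfolding T_def using sp assms pp by simp
    hence th: "T * \<eta> * s - pi / real p = 0" by simp
    have "T < pi/2"
    proof -
      have "pi / real p < s * \<eta> * (pi/2)" using False by simp
      hence "T * \<eta> * s < s * \<eta> * (pi/2)" using \<open>T * \<eta> * s = pi / real p\<close> by simp
      thus ?thesis using sp assms(2) by (simp add: mult.commute mult.left_commute)
    qed
    have "sin T > 0" using Tpos \<open>T < pi/2\<close> by (intro sin_gt_zero) auto
    hence "ell_minus p \<eta> T s \<ge> 0" unfolding ell_minus_def th using sp by simp
    then show ?thesis using that Tpos \<open>T < pi/2\<close> by simp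
  qed
  obtain x where x: "0 \<le> x" "x \<le> T" "ell_minus p \<eta> x s = 0"
    using IVT'[of "\<lambda>t. ell_minus p \<eta> t s" 0 0 T] l0 T ell_cont by force
  have "x \<noteq> 0" using x l0 by auto
  thus ?thesis using x T by (intro exI[of _ x]) auto
qed

theorem mainTheorem5:
  fixes p :: nat and \<eta> s :: real
  assumes "p \<ge> 2" and "\<eta> > 0" and "0 \<le> s" and "s \<le> 1"
  shows "(\<exists>\<tau>. 0 < \<tau> \<and> ell_minus p \<eta> \<tau> s = 0) \<and> tau_ell_minus p \<eta> s \<le> pi / 2"
proof -
  obtain x where x: "0 < x" "x \<le> pi/2" "ell_minus p \<eta> x s = 0"
    using root_exists[OF assms] by blast
  have "Inf {\<tau>. 0 < \<tau> \<and> ell_minus p \<eta> \<tau> s = 0} \<le> x"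
    by (rule cInf_lower) (use x in \<open>auto intro: bdd_belowI[of _ 0]\<close>)
  thus ?thesis using x unfolding tau_ell_minus_def by auto
qed

end
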